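(* Let $p\ge 1$ and $c>0$ be constants, let $a>0$, and let $x_a:[0,\infty)\to\mathbb{R}$ be the unique solution of $$x'''+c\,x^p\, x''=0,\qquad x(0)=0=x'(0),\quad x''(0)=a,$$ and let $h(a):=\lim_{t\to\infty}x_a'(t)$ (which exists and is finite and positive). Then the limit $\mu(a):=\lim_{t\to\infty}\big(h(a)t-x_a(t)\big)$ exists, is finite and is positive; that is, the graph of $x_a$ has the slant asymptote $h(a)t-\mu(a)$. Moreover, for all $t\ge 0$, $$\max\big(0,\,h(a)t-\mu(a)\big)\le x_a(t)\le h(a)t.$$ *)

theory Defs
  imports Complex_Main
begin

end

theory Submission
  imports Defs "HOL-Analysis.Analysis"
begin

lemma der_at:
  fixes f :: "real \<Rightarrow> real"
  assumes "t > 0" "(f has_real_derivative D) (at t within {0..})"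
  shows "(f has_real_derivative D) (at t)"
proof -
  have "t \<in> interior {0::real..}" using assms(1) by simp
  then have "at t within {0..} = at t" by (rule at_within_interior)
  with assms(2) show ?thesis by simp
qed

lemma der_cont:
  fixes f f' :: "real \<Rightarrow> real"
  assumes "\<And>t. t \<ge> 0 \<Longrightarrow> (f has_real_derivative f' t) (at t within {0..})"
  shows "continuous_on {0..} f"
  unfolding continuous_on_eq_continuous_within
  using assms DERIV_continuous by blast

lemma der_mono:
  fixes f f' :: "real \<Rightarrow> real"
  assumes "\<And>t. t \<ge> 0 \<Longrightarrow> (f has_real_derivative f' t) (at t within {0..})"
    and "0 \<le> a" "a \<le> b" "\<And>t. a < t \<Longrightarrow> t < b \<Longrightarrow> f' t \<ge> 0"
  shows "f a \<le> f b"
proof (rule DERIV_nonneg_imp_increasing_open[OF assms(3)])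
  fix t assume "a < t" "t < b"
  then show "\<exists>y. DERIV f t :> y \<and> 0 \<le> y"
    using assms der_at[of t f "f' t"] by (intro exI[of _ "f' t"]) auto
next
  show "continuous_on {a..b} f"
    using der_cont[OF assms(1)] by (rule continuous_on_subset) (use assms in auto)
qed

lemma der_smono:
  fixes f f' :: "real \<Rightarrow> real"
  assumes "\<And>t. t \<ge> 0 \<Longrightarrow> (f has_real_derivative f' t) (at t within {0..})"
    and "0 \<le> a" "a < b" "\<And>t. a < t \<Longrightarrow> t < b \<Longrightarrow> f' t > 0"
  shows "f a < f b"
proof (rule DERIV_pos_imp_increasing_open[OF assms(3)])
  fix t assume "a < t" "t < b"
  then show "\<exists>y. DERIV f t :> y \<and> 0 < y"
    using assms der_at[of t f "f' t"] by (intro exI[of _ "f' t"]) auto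
next
  show "continuous_on {a..b} f"
    using der_cont[OF assms(1)] by (rule continuous_on_subset) (use assms in auto)
qed

theorem lemma3:
  fixes p c a h :: real and x x1 x2 :: "real \<Rightarrow> real"
  assumes p: "p \<ge> 1" and c: "c > 0" and a: "a > 0"
    and d0: "\<And>t. t \<ge> 0 \<Longrightarrow> (x has_real_derivative x1 t) (at t within {0..})"
    and d1: "\<And>t. t \<ge> 0 \<Longrightarrow> (x1 has_real_derivative x2 t) (at t within {0..})"
    and d2: "\<And>t. t \<ge> 0 \<Longrightarrow>
               (x2 has_real_derivative (- c * (x t powr p) * x2 t)) (at t within {0..})"
    and init: "x 0 = 0" "x1 0 = 0" "x2 0 = a"
    and h: "(x1 \<longlongrightarrow> h) at_top"
  shows "\<exists>\<mu>. ((\<lambda>t. h * t - x t) \<longlongrightarrow> \<mu>) at_top \<and> \<mu> > 0 \<and>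
           (\<forall>t\<ge>0. max 0 (h * t - \<mu>) \<le> x t \<and> x t \<le> h * t)"
proof -
  have cx2: "continuous_on {0..} x2" using der_cont[OF d2] .
  have pos2: "x2 s > 0" if s: "s \<ge> 0" for s
  proof (rule ccontr)
    assume ns: "\<not> x2 s > 0"
    define S where "S = {t \<in> {0..s}. x2 t \<le> 0}"
    have Sne: "S \<noteq> {}" using ns s unfolding S_def by auto
    have Sbdd: "bdd_below S" unfolding S_def by (auto intro: bdd_belowI[of _ 0])
    have Scl: "closed S" unfolding S_def
      by (rule continuous_on_closed_Collect_le) 
         (auto intro: continuous_on_subset[OF cx2])
    define t0 where "t0 = Inf S"
    have t0S: "t0 \<in> S" unfolding t0_def using closed_contains_Inf[OF Sne Sbdd Scl] .
    then have t00: "t0 \<ge> 0" and x2t0: "x2 t0 \<le> 0" unfolding S_def by auto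
    have before: "x2 t > 0" if "0 \<le> t" "t < t0" for t
    proof (rule ccontr)
      assume "\<not> x2 t > 0"
      then have "t \<in> S" using that t0S unfolding S_def by auto
      then have "t0 \<le> t" unfolding t0_def using Sbdd by (rule cInf_lower)
      with that show False by simp
    qed
    have t0p: "t0 > 0" using t00 x2t0 init a by (cases "t0 = 0") auto
    have x1nn: "x1 t \<ge> 0" if "0 \<le> t" "t \<le> t0" for t
    proof -
      have "x1 0 \<le> x1 t" proof (rule der_mono[OF d1])
        fix u assume "0 < u" "u < t"
        then show "0 \<le> x2 u" using before[of u] that by simp
      qed (use that in auto)
      then show ?thesis using init by simp
    qed
    have xmono: "x t \<le> x t0" if "0 \<le> t" "t \<le> t0" for t
      using der_mono[OF d0, of t t0] that x1nn by auto
    have xnn: "x t \<ge> 0" if "0 \<le> t" "t \<le> t0" for t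
      using der_mono[OF d0, of 0 t] that x1nn init by auto
    define K where "K = c * (x t0 powr p)"
    define g where "g = (\<lambda>t. x2 t * exp (K * t))"
    have dg: "(g has_real_derivative (exp (K*t) * x2 t * (K - c * (x t powr p)))) (at t within {0..})"
      if "t \<ge> 0" for t
      unfolding g_def
      by (rule derivative_eq_intros d2[OF that] refl | simp add: algebra_simps)+
    have "g 0 \<le> g t0"
    proof (rule der_mono[OF dg])
      fix t assume t: "0 < t" "t < t0"
      have "x t powr p \<le> x t0 powr p"
        using xnn[of t] xmono[of t] t p by (intro powr_mono2) auto
      then have "c * (x t powr p) \<le> K" unfolding K_def using c by simp
      then show "exp (K*t) * x2 t * (K - c * (x t powr p)) \<ge> 0"
        using before[of t] t by simp
    qed (use t00 in auto)
    then have "a \<le> x2 t0 * exp (K * t0)" unfolding g_def using init by simp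
    moreover have "x2 t0 * exp (K * t0) \<le> 0" using x2t0 by (simp add: mult_nonpos_nonneg)
    ultimately show False using a by simp
  qed
  have x1smono: "x1 s < x1 t" if "0 \<le> s" "s < t" for s t
    using der_smono[OF d1, of s t] that pos2 by auto
  have x1mono: "x1 s \<le> x1 t" if "0 \<le> s" "s \<le> t" for s t
    using x1smono[of s t] that by (cases "s = t") auto
  have x1h: "x1 t \<le> h" if "t \<ge> 0" for t
  proof (rule tendsto_lowerbound[OF h])
    show "\<forall>\<^sub>F i in at_top. x1 t \<le> x1 i"
      using that by (auto intro!: x1mono simp: eventually_at_top_linorder)
  qed simp
  have x1lt: "x1 t < h" if "t \<ge> 0" for t
    using x1smono[of t "t+1"] x1h[of "t+1"] that by simp
  have x1nn: "x1 t \<ge> 0" if "t \<ge> 0" for t using x1mono[of 0 t] that init by simp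
  have hpos: "h > 0" using x1lt[of 0] init by simp
  define y where "y = (\<lambda>t. h * t - x t)"
  have dy: "(y has_real_derivative (h - x1 t)) (at t within {0..})" if "t \<ge> 0" for t
    unfolding y_def by (rule derivative_eq_intros d0[OF that] refl | simp)+
  have ymono: "y s \<le> y t" if "0 \<le> s" "s \<le> t" for s t
    using der_mono[OF dy, of s t] that x1h by auto
  have y0: "y 0 = 0" unfolding y_def using init by simp
  have y1: "y 1 > 0" using der_smono[OF dy, of 0 1] x1lt y0 by auto
  have xmono: "x s \<le> x t" if "0 \<le> s" "s \<le> t" for s t
    using der_mono[OF d0, of s t] that x1nn by auto
  define m where "m = x1 1"
  have mpos: "m > 0" unfolding m_def using x1smono[of 0 1] init by simp
  have xlin: "x t \<ge> m * (t - 1)" if "t \<ge> 1" for t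
  proof -
    have dd: "((\<lambda>t. x t - m * t) has_real_derivative (x1 t - m)) (at t within {0..})"
      if "t \<ge> 0" for t
      by (rule derivative_eq_intros d0[OF that] refl | simp)+
    have "x 1 - m * 1 \<le> x t - m * t"
      using der_mono[OF dd, of 1 t] that x1mono[of 1] unfolding m_def by auto
    moreover have "x 1 \<ge> 0" using xmono[of 0 1] init by simp
    ultimately show ?thesis by (simp add: algebra_simps)
  qed
  define T where "T = 1 + 1 / m"
  have T1: "T \<ge> 1" unfolding T_def using mpos by simp
  have xT: "x t \<ge> 1" if "t \<ge> T" for t
  proof -
    have "m * (T - 1) = 1" unfolding T_def using mpos by simp
    then have "x T \<ge> 1" using xlin[OF T1] by simp
    then show ?thesis using xmono[of T t] that T1 by simp
  qed
  define f where "f = (\<lambda>t. x1 t + x2 t / c)"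
  have df: "(f has_real_derivative (x2 t * (1 - x t powr p))) (at t within {0..})"
    if "t \<ge> 0" for t
    unfolding f_def
    by (rule derivative_eq_intros d1[OF that] d2[OF that] refl | use c in \<open>simp add: field_simps\<close>)+
  have fmono: "f t \<le> f s" if "T \<le> s" "s \<le> t" for s t
  proof -
    have dmf: "((\<lambda>t. - f t) has_real_derivative (- (x2 t * (1 - x t powr p)))) (at t within {0..})"
      if "t \<ge> 0" for t
      by (rule derivative_eq_intros df[OF that] refl)+
    have "- f s \<le> - f t"
    proof (rule der_mono[OF dmf])
      fix u assume u: "s < u" "u < t"
      have "1 \<le> x u powr p" using xT[of u] u that p by (intro ge_one_powr_ge_zero) auto
      moreover have "x2 u > 0" using pos2[of u] u that T1 by simp
      ultimately show "0 \<le> - (x2 u * (1 - x u powr p))"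
        by (simp add: mult_nonneg_nonpos)
    qed (use that T1 in auto)
    then show ?thesis by simp
  qed
  have fh: "f t \<ge> h" if "t \<ge> T" for t
  proof (rule tendsto_upperbound[OF h])
    show "\<forall>\<^sub>F i in at_top. x1 i \<le> f t"
      unfolding eventually_at_top_linorder
    proof (intro exI[of _ t] allI impI)
      fix s assume "s \<ge> t"
      then have "f s \<le> f t" using fmono[of t s] that by simp
      moreover have "x1 s \<le> f s" unfolding f_def using pos2[of s] \<open>s \<ge> t\<close> that T1 c by simp
      ultimately show "x1 s \<le> f t" by simp
    qed
  qed simp
  define z where "z = (\<lambda>t. x1 t / c - y t)"
  have dz: "(z has_real_derivative (x2 t / c - (h - x1 t))) (at t within {0..})"
    if "t \<ge> 0" for t
  proof -
    have "((\<lambda>t. x1 t / c - y t) has_real_derivative (x2 t / c - (h - x1 t))) (at t within {0..})"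
      by (intro DERIV_diff DERIV_cdivide d1[OF that] dy[OF that])
    then show ?thesis unfolding z_def .
  qed
  define B where "B = y T + h / c"
  have ybound: "y t \<le> B" if "t \<ge> 0" for t
  proof (cases "t \<le> T")
    case True
    have "h / c > 0" using c hpos by simp
    then show ?thesis using ymono[of t T] that True unfolding B_def by simp
  next
    case False
    have "z T \<le> z t"
    proof (rule der_mono[OF dz])
      fix u assume u: "T < u" "u < t"
      show "0 \<le> x2 u / c - (h - x1 u)" using fh[of u] u unfolding f_def by simp
    qed (use False T1 in auto)
    then have "y t \<le> y T + x1 t / c - x1 T / c" unfolding z_def by simp
    moreover have "x1 t / c \<le> h / c" using x1h[of t] that c by (simp add: divide_right_mono)
    moreover have "x1 T / c \<ge> 0" using x1nn[of T] T1 c by simp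
    ultimately show ?thesis unfolding B_def by simp
  qed
  define \<mu> where "\<mu> = Sup (y ` {0..})"
  have bdd: "bdd_above (y ` {0..})" using ybound by (auto intro: bdd_aboveI[of _ B])
  have yle: "y t \<le> \<mu>" if "t \<ge> 0" for t
    unfolding \<mu>_def using that bdd by (intro cSup_upper) auto
  have lim: "(y \<longlongrightarrow> \<mu>) at_top"
  proof (rule order_tendstoI)
    fix u assume "u < \<mu>"
    then obtain s where s: "s \<ge> 0" "u < y s"
      unfolding \<mu>_def using less_cSup_iff[of "y ` {0..}" u] bdd by auto
    show "\<forall>\<^sub>F t in at_top. u < y t"
      unfolding eventually_at_top_linorder
      using s ymono[of s] by (intro exI[of _ s]) (auto intro: less_le_trans)
  next
    fix u assume "u > \<mu>"
    show "\<forall>\<^sub>F t in at_top. y t < u"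
      unfolding eventually_at_top_linorder
      using yle \<open>u > \<mu>\<close> by (intro exI[of _ 0]) (auto intro: le_less_trans)
  qed
  have mupos: "\<mu> > 0" using yle[of 1] y1 by simp
  show ?thesis
  proof (intro exI[of _ \<mu>] conjI allI impI)
    show "((\<lambda>t. h * t - x t) \<longlongrightarrow> \<mu>) at_top" using lim unfolding y_def .
    show "\<mu> > 0" by (rule mupos)
  next
    fix t :: real assume t: "t \<ge> 0"
    show "max 0 (h * t - \<mu>) \<le> x t"
      using yle[OF t] xmono[of 0 t] t init unfolding y_def by simp
    show "x t \<le> h * t" using ymono[of 0 t] t y0 unfolding y_def by simp
  qed
qed

end
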